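(* Let $S\in\mathbb{S}^d_m$ and $G\in\mathcal{M}(S)$. Then the sets $\{(x,y):y\in P_G(x)\}$ and $\{(x,y):x\in P_G(y)\}$ are closed in $\mathbb{R}^{2d}$, the set $B:=\{(x,y):x\in P_G(y),\ P_G(x)\not\subset P_G(y)\}$ is an $F_\sigma$-set, and consequently $\{(x,y):x\in P_G(x)\subset P_G(y)\}$ is a Borel subset of $\mathbb{R}^{2d}$.
   Context: $\mathbb{S}^d_m$: symmetric invertible $d\times d$ real matrices with exactly $m$ positive eigenvalues; $S(x,y):=\langle x,Sy\rangle$. $G\subset\mathbb{R}^d$ is $S$-monotone if $S(x-y,x-y)\ge0$ for $x,y\in G$; maximal if not a strict subset of another $S$-monotone set; $\mathcal{M}(S)$ is the family of maximal $S$-monotone sets. $P_G(y):=\operatorname{argmax}_{x\in G}(S(x,y)-\frac12S(x,x))$, $y\in\mathbb{R}^d$. An $F_\sigma$-set is a countable union of closed sets. *)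

theory Defs
  imports "HOL-Analysis.Analysis"
begin

definition Sform :: "real^'n^'n \<Rightarrow> real^'n \<Rightarrow> real^'n \<Rightarrow> real" where
  "Sform S x y = x \<bullet> (S *v y)"

text \<open>Number of positive eigenvalues counted with multiplicity (for symmetric S,
  geometric multiplicity = algebraic multiplicity).\<close>
definition pos_eig_count :: "real^'n^'n \<Rightarrow> nat" where
  "pos_eig_count S =
     (\<Sum>c\<in>{c. c > 0 \<and> (\<exists>x. x \<noteq> 0 \<and> S *v x = c *\<^sub>R x)}.
        dim {x. S *v x = c *\<^sub>R x})"

definition SSym :: "nat \<Rightarrow> (real^'n^'n) set" where
  "SSym m = {S. transpose S = S \<and> invertible S \<and> pos_eig_count S = m}"

definition S_monotone :: "real^'n^'n \<Rightarrow> (real^'n) set \<Rightarrow> bool" where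
  "S_monotone S G \<longleftrightarrow> (\<forall>x\<in>G. \<forall>y\<in>G. Sform S (x - y) (x - y) \<ge> 0)"

definition max_S_monotone :: "real^'n^'n \<Rightarrow> (real^'n) set set" where
  "max_S_monotone S = {G. S_monotone S G \<and> (\<forall>G'. S_monotone S G' \<and> G \<subseteq> G' \<longrightarrow> G' = G)}"

definition PG :: "real^'n^'n \<Rightarrow> (real^'n) set \<Rightarrow> real^'n \<Rightarrow> (real^'n) set" where
  "PG S G y = {x\<in>G. \<forall>z\<in>G. Sform S z y - Sform S z z / 2 \<le> Sform S x y - Sform S x x / 2}"

end

theory Submission
  imports Defs
begin

lemma cont_mv[continuous_intros]:
  "continuous_on A f \<Longrightarrow> continuous_on A (\<lambda>x. (M::real^'n^'m) *v f x)"
  using bounded_linear.continuous_on[OF matrix_vector_mul_bounded_linear] by blast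

lemma cont_Sform[continuous_intros]:
  "continuous_on A f \<Longrightarrow> continuous_on A g \<Longrightarrow> continuous_on A (\<lambda>x. Sform S (f x) (g x))"
  unfolding Sform_def by (intro continuous_intros)

lemma max_closed:
  fixes S :: "real^'n^'n"
  assumes "G \<in> max_S_monotone S"
  shows "closed G"
proof -
  let ?M = "{p::(real^'n) \<times> (real^'n). Sform S (fst p - snd p) (fst p - snd p) \<ge> 0}"
  have cM: "closed ?M"
    by (intro closed_Collect_le continuous_intros)
  have "G \<times> G \<subseteq> ?M" using assms unfolding max_S_monotone_def S_monotone_def by auto
  hence "closure (G \<times> G) \<subseteq> ?M" using cM closure_minimal by blast
  hence "S_monotone S (closure G)" unfolding closure_Times S_monotone_def by auto
  moreover have "G \<subseteq> closure G" by (rule closure_subset)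
  ultimately have "closure G = G" using assms unfolding max_S_monotone_def by auto
  thus ?thesis using closure_closed closed_closure by metis
qed

lemma PG_closed:
  assumes "closed G"
  shows "closed {(x, y). y \<in> PG S G x}"
proof -
  have eq: "{(x, y). y \<in> PG S G x} = (snd -` G) \<inter>
     (\<Inter>z\<in>G. {p. Sform S z (fst p) - Sform S z z / 2 \<le> Sform S (snd p) (fst p) - Sform S (snd p) (snd p) / 2})"
    unfolding PG_def by auto
  show ?thesis unfolding eq
    by (intro closed_Int closed_vimage_snd assms closed_INT ballI closed_Collect_le continuous_intros, auto)
qed

lemma PG_closed2:
  assumes "closed G"
  shows "closed {(x, y). x \<in> PG S G y}"
proof -
  have eq: "{(x, y). x \<in> PG S G y} = (\<lambda>p. (snd p, fst p)) -` {(x, y). y \<in> PG S G x}" by auto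
  show ?thesis unfolding eq
    by (intro closed_vimage PG_closed assms continuous_intros)
qed

lemma B_union:
  fixes S :: "real^'n^'n" and G :: "(real^'n) set"
  assumes cG: "closed G"
  obtains F :: "nat \<Rightarrow> ((real^'n) \<times> (real^'n)) set"
  where "\<And>n. closed (F n)"
    and "{(x, y). x \<in> PG S G y \<and> \<not> (PG S G x \<subseteq> PG S G y)} = (\<Union>n. F n)"
proof -
  define q where "q z y = Sform S z y - Sform S z z / 2" for z y
  define D2 where "D2 = {(x, y). x \<in> PG S G y}"
  have cD2: "closed D2" unfolding D2_def using PG_closed2[OF cG] .
  define C where "C = {p::((real^'n) \<times> (real^'n)) \<times> ((real^'n) \<times> (real^'n)).
      fst (fst p) \<in> PG S G (snd (fst p)) \<and> fst (snd p) \<in> PG S G (fst (fst p)) \<and> snd (snd p) \<in> G}"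
  have Ceq: "C = (\<lambda>p. (fst (fst p), snd (fst p))) -` D2 \<inter> (\<lambda>p. (fst (snd p), fst (fst p))) -` D2
      \<inter> (\<lambda>p. snd (snd p)) -` G"
    unfolding C_def D2_def by auto
  have cC: "closed C" unfolding Ceq
    by (intro closed_Int closed_vimage cD2 cG continuous_intros)
  define A where "A n = (C \<inter> {p. 1 / real (Suc n) \<le> q (snd (snd p)) (snd (fst p)) - q (fst (snd p)) (snd (fst p))})
      \<inter> cball 0 (real n)" for n
  have compA: "compact (A n)" for n
    unfolding A_def q_def
    by (intro closed_Int_compact closed_Int cC closed_Collect_le continuous_intros compact_cball, auto)
  define F where "F n = fst ` A n" for n
  have cF: "closed (F n)" for n
    unfolding F_def
    by (intro compact_imp_closed compact_continuous_image compA continuous_intros)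
  have "{(x, y). x \<in> PG S G y \<and> \<not> (PG S G x \<subseteq> PG S G y)} = (\<Union>n. F n)"
  proof (intro equalityI subsetI)
    fix p assume "p \<in> {(x, y). x \<in> PG S G y \<and> \<not> (PG S G x \<subseteq> PG S G y)}"
    then obtain x y z where p: "p = (x, y)" and xP: "x \<in> PG S G y" and zP: "z \<in> PG S G x"
      and znP: "z \<notin> PG S G y" by auto
    have zG: "z \<in> G" using zP unfolding PG_def by auto
    then obtain w where wG: "w \<in> G" and lt: "q z y < q w y"
      using znP unfolding PG_def q_def by auto
    obtain n1 where n1: "inverse (real (Suc n1)) < q w y - q z y"
      using reals_Archimedean[of "q w y - q z y"] lt by auto
    obtain n2 where n2: "norm ((x, y), (z, w)) \<le> real n2" using real_arch_simple by blast
    define n where "n = max n1 n2"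
    have "1 / real (Suc n) \<le> 1 / real (Suc n1)"
      unfolding n_def by (intro divide_left_mono) auto
    hence i: "1 / real (Suc n) \<le> q w y - q z y" using n1 by (simp add: inverse_eq_divide)
    have "norm ((x, y), (z, w)) \<le> real n" using n2 unfolding n_def by auto
    moreover have "((x, y), (z, w)) \<in> C" unfolding C_def using xP zP wG by simp
    ultimately have "((x, y), (z, w)) \<in> A n"
      unfolding A_def using i by (simp add: mem_cball_0)
    thus "p \<in> (\<Union>n. F n)" unfolding F_def p by force
  next
    fix p assume "p \<in> (\<Union>n. F n)"
    then obtain n x y z w where p: "p = (x, y)" and "((x, y), (z, w)) \<in> A n"
      unfolding F_def by force
    hence xP: "x \<in> PG S G y" and zP: "z \<in> PG S G x" and wG: "w \<in> G"
      and i: "1 / real (Suc n) \<le> q w y - q z y"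
      unfolding A_def C_def by auto
    have "0 < 1 / real (Suc n)" by simp
    hence "q z y < q w y" using i by linarith
    hence "z \<notin> PG S G y" using wG unfolding PG_def q_def by force
    thus "p \<in> {(x, y). x \<in> PG S G y \<and> \<not> (PG S G x \<subseteq> PG S G y)}" using xP zP p by auto
  qed
  thus thesis using that cF by blast
qed

lemma lemma1_aux:
  fixes S :: "real^'n^'n" and G :: "(real^'n) set" and m :: nat
  assumes "S \<in> SSym m" and "G \<in> max_S_monotone S"
  shows "closed {(x, y). y \<in> PG S G x} \<and>
         closed {(x, y). x \<in> PG S G y} \<and>
         fsigma_in euclidean {(x, y). x \<in> PG S G y \<and> \<not> (PG S G x \<subseteq> PG S G y)} \<and>
         {(x, y). x \<in> PG S G x \<and> PG S G x \<subseteq> PG S G y} \<in> sets borel"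
proof -
  define B where "B = {(x, y). x \<in> PG S G y \<and> \<not> (PG S G x \<subseteq> PG S G y)}"
  define D where "D = {(x, y). x \<in> PG S G y}"
  define E :: "((real^'n) \<times> (real^'n)) set" where "E = {(x, y). x \<in> PG S G x \<and> PG S G x \<subseteq> PG S G y}"
  define D1 :: "((real^'n) \<times> (real^'n)) set" where "D1 = {(x, y). x \<in> PG S G x}"
  have cG: "closed G" using max_closed[OF assms(2)] .
  obtain F :: "nat \<Rightarrow> ((real^'n) \<times> (real^'n)) set" where cF: "\<And>n. closed (F n)"
    and Beq: "B = (\<Union>n. F n)"
    unfolding B_def by (rule B_union[OF cG, of S]) blast
  have fsF: "fsigma_in euclidean (F n)" for n
    using cF[of n] closed_closedin closed_imp_fsigma_in by metis
  have fs: "fsigma_in euclidean B"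
    unfolding Beq by (rule fsigma_in_Union) (use fsF in auto)
  have bF: "F n \<in> sets borel" for n using cF[of n] by (rule borel_closed)
  have Bb: "B \<in> sets borel"
    unfolding Beq by (rule sets.countable_UN) (use bF in auto)
  have cD: "closed D" unfolding D_def by (rule PG_closed2[OF cG])
  have "D1 = (\<lambda>p. (fst p, fst p)) -` D" unfolding D1_def D_def by auto
  hence c1: "closed D1" using cD by (simp add: closed_vimage continuous_intros)
  have Eeq: "E = (D1 \<inter> D) - B"
    unfolding E_def D1_def D_def B_def by auto
  have "E \<in> sets borel"
    unfolding Eeq by (rule sets.Diff[OF sets.Int[OF borel_closed[OF c1] borel_closed[OF cD]] Bb])
  thus ?thesis using PG_closed[OF cG] cD fs unfolding E_def D_def B_def by blast
qed

theorem lemma1: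
  fixes S :: "real^'n^'n" and G :: "(real^'n) set" and m :: nat
  assumes "S \<in> SSym m" and "G \<in> max_S_monotone S"
  shows "closed {(x, y). y \<in> PG S G x} \<and>
         closed {(x, y). x \<in> PG S G y} \<and>
         fsigma_in euclidean {(x, y). x \<in> PG S G y \<and> \<not> (PG S G x \<subseteq> PG S G y)} \<and>
         {(x, y). x \<in> PG S G x \<and> PG S G x \<subseteq> PG S G y} \<in> sets borel"
  by (rule lemma1_aux[OF assms])

end
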